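(* Let $G$ be a finite group with $Z(G)=I$, and suppose there is an integer $n_0\ge 3$ such that $l^i(D_1,\dots,D_n)\ge1$ for all class vectors $(D_1,\dots,D_n)$ of $G$ of length $n\in\{n_0,n_0+1,\dots,2n_0-1\}$. Then the set of class vectors $(C_1,\dots,C_m)$ of $G$ (of any length $m$) with $l^i(C_1,\dots,C_m)=0$ is finite, and $\lim_{m\to\infty}l^i(C_1,\dots,C_m)=\infty$, i.e. for every sequence of class vectors of $G$ whose lengths $m$ tend to infinity, the values $l^i(C_1,\dots,C_m)$ tend to infinity.
   Context: $I$ is the trivial group and $\iota$ the identity. A class vector of length $k$ is a tuple of $k$ non-trivial conjugacy classes of $G$. $\Sigma^i(C_1,\dots,C_k)$ is the set of $G$-conjugacy classes (simultaneous conjugation) of tuples $(\sigma_1,\dots,\sigma_k)$ with $\sigma_j\in C_j$, $\langle\sigma_1,\dots,\sigma_k\rangle=G$, $\sigma_1\cdots\sigma_k=\iota$, and $l^i(C_1,\dots,C_k)=|\Sigma^i(C_1,\dots,C_k)|$. *)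

theory Defs
  imports "HOL-Algebra.Group_Action" "HOL-Algebra.Generated_Groups"
begin

definition center :: "('a, 'b) monoid_scheme \<Rightarrow> 'a set" where
  "center G = {z \<in> carrier G. \<forall>g \<in> carrier G. z \<otimes>\<^bsub>G\<^esub> g = g \<otimes>\<^bsub>G\<^esub> z}"

definition conj_act :: "('a, 'b) monoid_scheme \<Rightarrow> 'a \<Rightarrow> 'a \<Rightarrow> 'a" where
  "conj_act G g x = g \<otimes>\<^bsub>G\<^esub> x \<otimes>\<^bsub>G\<^esub> inv\<^bsub>G\<^esub> g"

definition conj_classes :: "('a, 'b) monoid_scheme \<Rightarrow> 'a set set" where
  "conj_classes G = orbits G (carrier G) (conj_act G)"

definition nontriv_classes :: "('a, 'b) monoid_scheme \<Rightarrow> 'a set set" where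
  "nontriv_classes G = conj_classes G - {{\<one>\<^bsub>G\<^esub>}}"

definition class_vector :: "('a, 'b) monoid_scheme \<Rightarrow> 'a set list \<Rightarrow> bool" where
  "class_vector G Cs \<longleftrightarrow> set Cs \<subseteq> nontriv_classes G"

definition list_prod :: "('a, 'b) monoid_scheme \<Rightarrow> 'a list \<Rightarrow> 'a" where
  "list_prod G xs = foldr (\<lambda>x y. x \<otimes>\<^bsub>G\<^esub> y) xs \<one>\<^bsub>G\<^esub>"

definition gen_tuples :: "('a, 'b) monoid_scheme \<Rightarrow> 'a set list \<Rightarrow> 'a list set" where
  "gen_tuples G Cs = {xs. length xs = length Cs \<and> (\<forall>j < length Cs. xs ! j \<in> Cs ! j)
      \<and> generate G (set xs) = carrier G \<and> list_prod G xs = \<one>\<^bsub>G\<^esub>}"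

definition sim_conj :: "('a, 'b) monoid_scheme \<Rightarrow> 'a \<Rightarrow> 'a list \<Rightarrow> 'a list" where
  "sim_conj G g xs = map (conj_act G g) xs"

definition Sigma_i :: "('a, 'b) monoid_scheme \<Rightarrow> 'a set list \<Rightarrow> 'a list set set" where
  "Sigma_i G Cs = orbits G (gen_tuples G Cs) (sim_conj G)"

definition l_i :: "('a, 'b) monoid_scheme \<Rightarrow> 'a set list \<Rightarrow> nat" where
  "l_i G Cs = card (Sigma_i G Cs)"

end

theory Submission
  imports Defs
begin

context group
begin

lemma conj_in: "g \<in> carrier G \<Longrightarrow> x \<in> carrier G \<Longrightarrow> conj_act G g x \<in> carrier G"
  by (simp add: conj_act_def)

lemma conj_comp: "g \<in> carrier G \<Longrightarrow> h \<in> carrier G \<Longrightarrow> x \<in> carrier G \<Longrightarrow>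
   conj_act G g (conj_act G h x) = conj_act G (g \<otimes> h) x"
  by (simp add: conj_act_def m_assoc inv_mult_group)

lemma conj_one_act: "x \<in> carrier G \<Longrightarrow> conj_act G \<one> x = x"
  by (simp add: conj_act_def)

lemma conj_mult: "g \<in> carrier G \<Longrightarrow> x \<in> carrier G \<Longrightarrow> y \<in> carrier G \<Longrightarrow>
   conj_act G g (x \<otimes> y) = conj_act G g x \<otimes> conj_act G g y"
proof -
  assume a: "g \<in> carrier G" "x \<in> carrier G" "y \<in> carrier G"
  have "g \<otimes> x \<otimes> inv g \<otimes> (g \<otimes> y \<otimes> inv g) = g \<otimes> x \<otimes> (inv g \<otimes> g) \<otimes> y \<otimes> inv g"
    using a by (simp add: m_assoc[symmetric]) (simp add: m_assoc)
  also have "\<dots> = g \<otimes> (x \<otimes> y) \<otimes> inv g" using a by (simp add: m_assoc)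
  finally show ?thesis by (simp add: conj_act_def)
qed

lemma conj_inv: "g \<in> carrier G \<Longrightarrow> x \<in> carrier G \<Longrightarrow>
   conj_act G g (inv x) = inv (conj_act G g x)"
  by (simp add: conj_act_def m_assoc inv_mult_group)

lemma conj_oneE: "g \<in> carrier G \<Longrightarrow> conj_act G g \<one> = \<one>"
  by (simp add: conj_act_def)

lemma conj_classes_sub: "C \<in> conj_classes G \<Longrightarrow> C \<subseteq> carrier G"
  unfolding conj_classes_def orbits_def orbit_def using conj_in by auto

lemma conj_classes_closed: "C \<in> conj_classes G \<Longrightarrow> x \<in> C \<Longrightarrow> g \<in> carrier G \<Longrightarrow> conj_act G g x \<in> C"
  unfolding conj_classes_def orbits_def orbit_def
  using conj_comp by auto

lemma conj_classes_ne: "C \<in> conj_classes G \<Longrightarrow> C \<noteq> {}"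
  unfolding conj_classes_def orbits_def orbit_def by auto

lemma generate_conj:
  assumes S: "S \<subseteq> carrier G" and g: "g \<in> carrier G" and x: "x \<in> generate G S"
  shows "conj_act G g x \<in> generate G (conj_act G g ` S)"
  using x
proof induction
  case one
  then show ?case using g by (simp add: conj_oneE generate.one)
next
  case (incl h)
  then show ?case by (simp add: generate.incl)
next
  case (inv h)
  have h: "h \<in> carrier G" using inv S by auto
  have "conj_act G g h \<in> conj_act G g ` S" using inv by simp
  then have "inv (conj_act G g h) \<in> generate G (conj_act G g ` S)" by (rule generate.inv)
  then show ?case using h g by (simp add: conj_inv)
next
  case (eng h1 h2)
  have "h1 \<in> carrier G" "h2 \<in> carrier G" using eng generate_in_carrier S by auto
  then show ?case using eng g by (simp add: conj_mult generate.eng)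
qed

lemma generate_conj_full:
  assumes S: "S \<subseteq> carrier G" and g: "g \<in> carrier G" and gen: "generate G S = carrier G"
  shows "generate G (conj_act G g ` S) = carrier G"
proof
  have "conj_act G g ` S \<subseteq> carrier G" using S g conj_in by auto
  then show "generate G (conj_act G g ` S) \<subseteq> carrier G" by (rule generate_incl)
next
  show "carrier G \<subseteq> generate G (conj_act G g ` S)"
  proof
    fix y assume y: "y \<in> carrier G"
    have "conj_act G (inv g) y \<in> carrier G" using y g conj_in by auto
    then have "conj_act G g (conj_act G (inv g) y) \<in> generate G (conj_act G g ` S)"
      using generate_conj[OF S g] gen by auto
    moreover have "conj_act G g (conj_act G (inv g) y) = y"
      using conj_comp[of g "inv g" y] y g conj_one_act by simp
    ultimately show "y \<in> generate G (conj_act G g ` S)" by simp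
  qed
qed

lemma commute_generate:
  assumes S: "S \<subseteq> carrier G" and z: "z \<in> carrier G"
    and c: "\<And>s. s \<in> S \<Longrightarrow> z \<otimes> s = s \<otimes> z" and x: "x \<in> generate G S"
  shows "z \<otimes> x = x \<otimes> z"
  using x
proof induction
  case one
  then show ?case using z by simp
next
  case (incl h)
  then show ?case using c by simp
next
  case (inv h)
  have h: "h \<in> carrier G" using inv S by auto
  have "z \<otimes> h = h \<otimes> z" using c inv by simp
  have "z \<otimes> inv h = inv h \<otimes> (h \<otimes> z) \<otimes> inv h" using h z by (simp add: m_assoc[symmetric])
  also have "\<dots> = inv h \<otimes> (z \<otimes> h) \<otimes> inv h" using \<open>z \<otimes> h = h \<otimes> z\<close> by simp
  also have "\<dots> = inv h \<otimes> z" using h z by (simp add: m_assoc)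
  finally show ?case .
next
  case (eng h1 h2)
  have "h1 \<in> carrier G" "h2 \<in> carrier G" using eng generate_in_carrier S by auto
  then show ?case using eng z by (metis m_assoc)
qed

lemma cv_sub: "class_vector G Cs \<Longrightarrow> C \<in> set Cs \<Longrightarrow> C \<subseteq> carrier G"
  unfolding class_vector_def nontriv_classes_def using conj_classes_sub by auto

lemma gt_carrier:
  assumes cv: "class_vector G Cs" and xs: "xs \<in> gen_tuples G Cs"
  shows "set xs \<subseteq> carrier G"
proof
  fix x assume "x \<in> set xs"
  then obtain j where j: "j < length xs" "xs ! j = x" by (auto simp: in_set_conv_nth)
  then have "j < length Cs" "x \<in> Cs ! j" using xs by (auto simp: gen_tuples_def)
  then show "x \<in> carrier G" using cv_sub[OF cv] nth_mem by blast
qed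

lemma list_prod_carrier: "set xs \<subseteq> carrier G \<Longrightarrow> list_prod G xs \<in> carrier G"
  by (induction xs) (auto simp: list_prod_def)

lemma list_prod_conj: "set xs \<subseteq> carrier G \<Longrightarrow> g \<in> carrier G \<Longrightarrow>
   list_prod G (map (conj_act G g) xs) = conj_act G g (list_prod G xs)"
proof (induction xs)
  case Nil
  then show ?case by (simp add: list_prod_def conj_oneE)
next
  case (Cons a xs)
  have "list_prod G (map (conj_act G g) (a # xs)) = conj_act G g a \<otimes> list_prod G (map (conj_act G g) xs)"
    by (simp add: list_prod_def)
  also have "\<dots> = conj_act G g a \<otimes> conj_act G g (list_prod G xs)" using Cons by simp
  also have "\<dots> = conj_act G g (a \<otimes> list_prod G xs)"
    using Cons list_prod_carrier by (simp add: conj_mult)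
  finally show ?case by (simp add: list_prod_def)
qed

lemma gt_append:
  assumes cvA: "class_vector G As" and xs: "xs \<in> gen_tuples G As"
    and cvB: "class_vector G Bs" and ys: "ys \<in> gen_tuples G Bs"
  shows "xs @ ys \<in> gen_tuples G (As @ Bs)"
proof -
  have lx: "length xs = length As" and ly: "length ys = length Bs" using xs ys by (auto simp: gen_tuples_def)
  have nth: "\<forall>j < length (As @ Bs). (xs @ ys) ! j \<in> (As @ Bs) ! j"
  proof (intro allI impI)
    fix j assume "j < length (As @ Bs)"
    then show "(xs @ ys) ! j \<in> (As @ Bs) ! j"
      using xs ys lx ly by (cases "j < length As") (auto simp: gen_tuples_def nth_append)
  qed
  have sx: "set xs \<subseteq> carrier G" "set ys \<subseteq> carrier G" using gt_carrier cvA cvB xs ys by auto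
  have "generate G (set (xs @ ys)) \<subseteq> carrier G" using sx by (intro generate_incl) auto
  moreover have "generate G (set xs) \<subseteq> generate G (set (xs @ ys))" by (intro mono_generate) auto
  ultimately have "generate G (set (xs @ ys)) = carrier G" using xs by (auto simp: gen_tuples_def)
  moreover have "list_prod G (xs @ ys) = \<one>" using xs ys by (simp add: gen_tuples_def list_prod_def)
  ultimately show ?thesis using nth lx ly by (simp add: gen_tuples_def)
qed

lemma gt_conj:
  assumes cv: "class_vector G Cs" and xs: "xs \<in> gen_tuples G Cs" and g: "g \<in> carrier G"
  shows "sim_conj G g xs \<in> gen_tuples G Cs"
proof -
  have sx: "set xs \<subseteq> carrier G" using gt_carrier cv xs by auto
  have cls: "\<And>j. j < length Cs \<Longrightarrow> Cs ! j \<in> conj_classes G"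
    using cv nth_mem unfolding class_vector_def nontriv_classes_def by blast
  have "\<forall>j < length Cs. sim_conj G g xs ! j \<in> Cs ! j"
    using xs g cls conj_classes_closed by (auto simp: gen_tuples_def sim_conj_def)
  moreover have "generate G (set (sim_conj G g xs)) = carrier G"
    using generate_conj_full[OF sx g] xs by (simp add: gen_tuples_def sim_conj_def)
  moreover have "list_prod G (sim_conj G g xs) = \<one>"
    using list_prod_conj[OF sx g] xs g by (simp add: gen_tuples_def sim_conj_def conj_oneE)
  ultimately show ?thesis using xs by (simp add: gen_tuples_def sim_conj_def)
qed

lemma sim_conj_inj:
  assumes sa: "set a \<subseteq> carrier G" and gen: "generate G (set a) = carrier G"
    and Z: "center G = {\<one>}" and g: "g \<in> carrier G" and h: "h \<in> carrier G"
    and eq: "sim_conj G g a = sim_conj G h a"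
  shows "g = h"
proof -
  let ?z = "inv h \<otimes> g"
  have z: "?z \<in> carrier G" using g h by simp
  have c: "?z \<otimes> s = s \<otimes> ?z" if s: "s \<in> set a" for s
  proof -
    have sc: "s \<in> carrier G" using s sa by auto
    have e: "g \<otimes> s \<otimes> inv g = h \<otimes> s \<otimes> inv h"
      using eq s unfolding sim_conj_def conj_act_def by (simp add: map_eq_conv)
    have "?z \<otimes> s = inv h \<otimes> (g \<otimes> s \<otimes> inv g) \<otimes> g" using g h sc by (simp add: m_assoc)
    also have "\<dots> = inv h \<otimes> (h \<otimes> s \<otimes> inv h) \<otimes> g" using e by simp
    also have "\<dots> = s \<otimes> ?z" using g h sc by (simp add: m_assoc[symmetric])
    finally show ?thesis .
  qed
  have "?z \<in> center G"
    unfolding center_def using z commute_generate[OF sa z c] gen by auto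
  then have "?z = \<one>" using Z by auto
  then show ?thesis using g h by (metis inv_closed inv_inv inv_equality)
qed

lemma gt_finite: "class_vector G Cs \<Longrightarrow> finite (carrier G) \<Longrightarrow> finite (gen_tuples G Cs)"
  apply (rule finite_subset[of _ "{xs. set xs \<subseteq> carrier G \<and> length xs = length Cs}"])
  using gt_carrier apply (force simp: gen_tuples_def)
  by (rule finite_lists_length_eq)

lemma sim_conj_one: "set xs \<subseteq> carrier G \<Longrightarrow> sim_conj G \<one> xs = xs"
  by (induction xs) (auto simp: sim_conj_def conj_one_act)

lemma card_gt_le:
  assumes cv: "class_vector G Cs" and fin: "finite (carrier G)"
  shows "card (gen_tuples G Cs) \<le> l_i G Cs * card (carrier G)"
proof -
  let ?T = "gen_tuples G Cs"
  have "?T \<subseteq> \<Union> (Sigma_i G Cs)"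
  proof
    fix x assume x: "x \<in> ?T"
    then have "x \<in> orbit G (sim_conj G) x" unfolding orbit_def
      using sim_conj_one gt_carrier[OF cv x] by (metis (mono_tags, lifting) mem_Collect_eq one_closed)
    then show "x \<in> \<Union> (Sigma_i G Cs)" using x unfolding Sigma_i_def orbits_def by auto
  qed
  moreover have "finite (Sigma_i G Cs)"
    unfolding Sigma_i_def orbits_def using gt_finite[OF cv fin] by simp
  moreover have "\<And>Ob. Ob \<in> Sigma_i G Cs \<Longrightarrow> card Ob \<le> card (carrier G) \<and> finite Ob"
  proof -
    fix Ob assume "Ob \<in> Sigma_i G Cs"
    then obtain x where "Ob = (\<lambda>g. sim_conj G g x) ` carrier G"
      unfolding Sigma_i_def orbits_def orbit_def by (auto simp: image_def)
    then show "card Ob \<le> card (carrier G) \<and> finite Ob" using fin by (simp add: card_image_le)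
  qed
  ultimately have "card ?T \<le> card (\<Union> (Sigma_i G Cs))"
    by (intro card_mono) auto
  also have "\<dots> \<le> sum card (Sigma_i G Cs)" by (rule card_Union_le_sum_card)
  also have "\<dots> \<le> card (Sigma_i G Cs) * card (carrier G)"
    using \<open>\<And>Ob. Ob \<in> Sigma_i G Cs \<Longrightarrow> card Ob \<le> card (carrier G) \<and> finite Ob\<close>
    using sum_bounded_above[of "Sigma_i G Cs" card "card (carrier G)"] by simp
  finally show ?thesis by (simp add: l_i_def)
qed

lemma l_i_pos:
  assumes cv: "class_vector G Cs" and fin: "finite (carrier G)"
  shows "l_i G Cs \<ge> 1 \<longleftrightarrow> gen_tuples G Cs \<noteq> {}"
proof -
  have "finite (Sigma_i G Cs)"
    unfolding Sigma_i_def orbits_def using gt_finite[OF cv fin] by simp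
  moreover have "Sigma_i G Cs = {} \<longleftrightarrow> gen_tuples G Cs = {}"
    unfolding Sigma_i_def orbits_def by auto
  ultimately show ?thesis unfolding l_i_def
    by (metis One_nat_def card_gt_0_iff less_eq_Suc_le)
qed

lemma main_bound:
  assumes fin: "finite (carrier G)" and Z: "center G = {\<one>}" and n0: "n0 \<ge> 1"
    and H: "\<And>Ds. class_vector G Ds \<Longrightarrow> n0 \<le> length Ds \<Longrightarrow> length Ds \<le> 2 * n0 - 1
           \<Longrightarrow> l_i G Ds \<ge> 1"
  shows "class_vector G Cs \<Longrightarrow> n0 \<le> length Cs \<Longrightarrow>
     card (carrier G) ^ ((length Cs - n0) div n0) \<le> card (gen_tuples G Cs)"
proof (induction "length Cs" arbitrary: Cs rule: less_induct)
  case less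
  show ?case
  proof (cases "length Cs \<le> 2 * n0 - 1")
    case True
    then have "gen_tuples G Cs \<noteq> {}" using H less.prems l_i_pos fin by blast
    then have "card (gen_tuples G Cs) \<ge> 1" using gt_finite less.prems fin
      by (metis One_nat_def card_gt_0_iff less_eq_Suc_le)
    moreover have "(length Cs - n0) div n0 = 0" using True n0 by simp
    ultimately show ?thesis by simp
  next
    case False
    define A where "A = take n0 Cs"
    define B where "B = drop n0 Cs"
    have AB: "Cs = A @ B" by (simp add: A_def B_def)
    have cvA: "class_vector G A" and cvB: "class_vector G B" using less.prems
      unfolding A_def B_def class_vector_def by (meson order_trans set_take_subset set_drop_subset)+
    have lA: "length A = n0" using False unfolding A_def by simp
    have lB: "length B = length Cs - n0" unfolding B_def by simp
    have IH: "card (carrier G) ^ ((length B - n0) div n0) \<le> card (gen_tuples G B)"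
      using less.hyps[of B] lB n0 False cvB by simp
    have "gen_tuples G A \<noteq> {}" using H[OF cvA] lA n0 l_i_pos[OF cvA fin] by simp
    then obtain a where a: "a \<in> gen_tuples G A" by blast
    have sa: "set a \<subseteq> carrier G" using gt_carrier[OF cvA a] .
    have gena: "generate G (set a) = carrier G" using a by (simp add: gen_tuples_def)
    let ?F = "\<lambda>(g, ys). sim_conj G g a @ ys"
    have inj: "inj_on ?F (carrier G \<times> gen_tuples G B)"
    proof (rule inj_onI, clarify)
      fix g ys h zs
      assume g: "g \<in> carrier G" and h: "h \<in> carrier G"
        and e: "sim_conj G g a @ ys = sim_conj G h a @ zs"
      have "length (sim_conj G g a) = length (sim_conj G h a)" by (simp add: sim_conj_def)
      then have "sim_conj G g a = sim_conj G h a" "ys = zs" using e by auto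
      then show "g = h \<and> ys = zs" using sim_conj_inj[OF sa gena Z g h] by simp
    qed
    have img: "?F ` (carrier G \<times> gen_tuples G B) \<subseteq> gen_tuples G Cs"
      using AB gt_append[OF cvA gt_conj[OF cvA a] cvB] by auto
    have "card (carrier G \<times> gen_tuples G B) \<le> card (gen_tuples G Cs)"
      using card_inj_on_le[OF inj img] gt_finite less.prems fin by simp
    then have le: "card (carrier G) * card (gen_tuples G B) \<le> card (gen_tuples G Cs)"
      by (simp add: card_cartesian_product)
    have ex: "(length Cs - n0) div n0 = Suc ((length B - n0) div n0)"
    proof -
      have "length Cs - n0 = (length B - n0) + n0" using lB False by simp
      then show ?thesis using n0 by (simp add: div_add_self2)
    qed
    have "card (carrier G) ^ ((length Cs - n0) div n0)
        = card (carrier G) * card (carrier G) ^ ((length B - n0) div n0)" using ex by simp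
    also have "\<dots> \<le> card (carrier G) * card (gen_tuples G B)" using IH by simp
    finally show ?thesis using le by simp
  qed
qed

end


theorem corollary9:
  fixes G :: "('a, 'b) monoid_scheme" and n0 :: nat
  assumes "group G"
    and "finite (carrier G)"
    and "center G = {\<one>\<^bsub>G\<^esub>}"
    and "n0 \<ge> 3"
    and "\<And>Ds. class_vector G Ds \<Longrightarrow> n0 \<le> length Ds \<Longrightarrow> length Ds \<le> 2 * n0 - 1
           \<Longrightarrow> l_i G Ds \<ge> 1"
  shows "finite {Cs. class_vector G Cs \<and> l_i G Cs = 0}
         \<and> (\<forall>f :: nat \<Rightarrow> 'a set list. (\<forall>m. class_vector G (f m))
           \<longrightarrow> filterlim (\<lambda>m. length (f m)) at_top sequentially
           \<longrightarrow> filterlim (\<lambda>m. l_i G (f m)) at_top sequentially)"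
proof -
  interpret group G by fact
  note fin = assms(2) and Z = assms(3) and H = assms(5)
  have n0: "n0 \<ge> 1" using assms(4) by simp
  have cpos: "card (carrier G) > 0" using fin by (metis card_gt_0_iff empty_iff one_closed)
  have bound: "card (carrier G) ^ ((length Cs - n0) div n0) \<le> card (gen_tuples G Cs)"
    if "class_vector G Cs" "n0 \<le> length Cs" for Cs
    using main_bound[OF fin Z n0 H] that by blast
  have pos: "l_i G Cs \<ge> 1" if cv: "class_vector G Cs" and l: "n0 \<le> length Cs" for Cs
  proof -
    have "card (gen_tuples G Cs) > 0" using bound[OF cv l] cpos
      by (metis le_zero_eq not_gr_zero power_not_zero)
    then show ?thesis using l_i_pos[OF cv fin] by auto
  qed
  have part1: "finite {Cs. class_vector G Cs \<and> l_i G Cs = 0}"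
  proof (rule finite_subset)
    show "{Cs. class_vector G Cs \<and> l_i G Cs = 0} \<subseteq> {xs. set xs \<subseteq> nontriv_classes G \<and> length xs \<le> n0}"
      using pos by (force simp: class_vector_def)
    have "nontriv_classes G \<subseteq> Pow (carrier G)"
      unfolding nontriv_classes_def using conj_classes_sub by auto
    then have "finite (nontriv_classes G)" using fin by (meson finite_Pow_iff finite_subset)
    then show "finite {xs. set xs \<subseteq> nontriv_classes G \<and> length xs \<le> n0}"
      by (rule finite_lists_length_le)
  qed
  have part2: "filterlim (\<lambda>m. l_i G (f m)) at_top sequentially"
    if cvf: "\<forall>m. class_vector G (f m)" and lim: "filterlim (\<lambda>m. length (f m)) at_top sequentially"
    for f :: "nat \<Rightarrow> 'a set list"
  proof (cases "card (carrier G) = 1")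
    case True
    have "f m = []" for m
    proof (rule ccontr)
      assume "f m \<noteq> []"
      then obtain C where C: "C \<in> set (f m)" by (cases "f m") auto
      then have Cn: "C \<in> conj_classes G" "C \<noteq> {\<one>\<^bsub>G\<^esub>}"
        using cvf unfolding class_vector_def nontriv_classes_def by auto
      have "carrier G = {\<one>\<^bsub>G\<^esub>}" using True by (metis card_1_singletonE one_closed singletonD)
      then show False using Cn conj_classes_sub conj_classes_ne by (metis subset_singletonD)
    qed
    then have "filterlim (\<lambda>m. 0::nat) at_top sequentially" using lim by simp
    then show ?thesis unfolding filterlim_at_top by (metis eventually_False_sequentially not_one_le_zero eventually_mono)
  next
    case False
    let ?c = "card (carrier G)"
    have c2: "?c \<ge> 2" using False cpos by simp
    show ?thesis unfolding filterlim_at_top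
    proof
      fix Zb :: nat
      have "eventually (\<lambda>m. n0 + n0 * (?c * Zb + 1) \<le> length (f m)) sequentially"
        using lim unfolding filterlim_at_top by blast
      then show "eventually (\<lambda>m. Zb \<le> l_i G (f m)) sequentially"
      proof (rule eventually_mono)
        fix m assume len: "n0 + n0 * (?c * Zb + 1) \<le> length (f m)"
        let ?k = "(length (f m) - n0) div n0"
        have "n0 * (?c * Zb + 1) \<le> length (f m) - n0" using len by simp
        then have k: "?c * Zb + 1 \<le> ?k" using n0
          by (metis div_le_mono nonzero_mult_div_cancel_left not_one_le_zero)
        have "?k < 2 ^ ?k" by (rule less_exp)
        also have "\<dots> \<le> ?c ^ ?k" using c2 by (simp add: power_mono)
        also have "\<dots> \<le> card (gen_tuples G (f m))" using bound[of "f m"] cvf len by simp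
        also have "\<dots> \<le> l_i G (f m) * ?c" using card_gt_le cvf fin by blast
        finally have "?k < l_i G (f m) * ?c" .
        then have "?k < ?c * l_i G (f m)" by (simp only: mult.commute)
        then have "?c * Zb < ?c * l_i G (f m)" using k by linarith
        then show "Zb \<le> l_i G (f m)" by simp
      qed
    qed
  qed
  show ?thesis using part1 part2 by blast
qed

end
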